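(* For every LDBA $A$ with $n$ states, of which $n_d$ lie in the deterministic part $Q_d$, there is a deterministic parity automaton $B$ with $\mathsf L(B)=\mathsf L(A)$ having at most $2^{n}\cdot\sum_{i=0}^{n_d}\frac{n_d!}{(n_d-i)!}\le 2^n\cdot e\cdot n_d\cdot n_d!$ states (hence $2^{\mathcal O(n\log n)}$ states) and using at most $2n_d+1$ colors (hence $\mathcal O(n)$ colors).
   Context: A (transition-based) nondeterministic Büchi automaton is $A=(Q,q_0,\Sigma,\delta,\alpha)$ with finite $Q$, $q_0\in Q$, finite alphabet $\Sigma$, total $\delta\subseteq Q\times\Sigma\times Q$, accepting transitions $\alpha\subseteq\delta$; a run is accepting if it uses transitions of $\alpha$ infinitely often. An LDBA additionally has $Q_d\subseteq Q$ with (1) $\alpha\subseteq Q_d\times\Sigma\times Q_d$; (2) each $q\in Q_d$ has exactly one $\sigma$-successor for each $\sigma$; (3) successors of states in $Q_d$ lie in $Q_d$; and $q_0\notin Q_d$. A deterministic parity automaton (DPA) has a deterministic total transition function and a coloring of transitions by positive integers; a word is accepted iff the minimal color seen infinitely often on its run is even. $e$ denotes Euler's number. *)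

theory Defs
  imports Complex_Main
begin

definition is_nba :: "'q set \<Rightarrow> 'q \<Rightarrow> 'a set \<Rightarrow> ('q \<times> 'a \<times> 'q) set \<Rightarrow> ('q \<times> 'a \<times> 'q) set \<Rightarrow> bool" where
  "is_nba Q q0 \<Sigma> \<delta> \<alpha> \<longleftrightarrow>
     finite Q \<and> q0 \<in> Q \<and> finite \<Sigma> \<and> \<delta> \<subseteq> Q \<times> \<Sigma> \<times> Q \<and>
     (\<forall>q\<in>Q. \<forall>\<sigma>\<in>\<Sigma>. \<exists>q'. (q, \<sigma>, q') \<in> \<delta>) \<and> \<alpha> \<subseteq> \<delta>"

definition is_ldba :: "'q set \<Rightarrow> 'q \<Rightarrow> 'a set \<Rightarrow> ('q \<times> 'a \<times> 'q) set \<Rightarrow> ('q \<times> 'a \<times> 'q) set \<Rightarrow> 'q set \<Rightarrow> bool" where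
  "is_ldba Q q0 \<Sigma> \<delta> \<alpha> Qd \<longleftrightarrow>
     is_nba Q q0 \<Sigma> \<delta> \<alpha> \<and> Qd \<subseteq> Q \<and>
     \<alpha> \<subseteq> Qd \<times> \<Sigma> \<times> Qd \<and>
     (\<forall>q\<in>Qd. \<forall>\<sigma>\<in>\<Sigma>. \<exists>!q'. (q, \<sigma>, q') \<in> \<delta>) \<and>
     (\<forall>q \<sigma> q'. (q, \<sigma>, q') \<in> \<delta> \<and> q \<in> Qd \<longrightarrow> q' \<in> Qd) \<and>
     q0 \<notin> Qd"

definition words :: "'a set \<Rightarrow> (nat \<Rightarrow> 'a) set" where
  "words \<Sigma> = {w. \<forall>i. w i \<in> \<Sigma>}"

definition nba_run :: "'q \<Rightarrow> ('q \<times> 'a \<times> 'q) set \<Rightarrow> (nat \<Rightarrow> 'a) \<Rightarrow> (nat \<Rightarrow> 'q) \<Rightarrow> bool" where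
  "nba_run q0 \<delta> w r \<longleftrightarrow> r 0 = q0 \<and> (\<forall>i. (r i, w i, r (Suc i)) \<in> \<delta>)"

definition nba_lang :: "'q \<Rightarrow> 'a set \<Rightarrow> ('q \<times> 'a \<times> 'q) set \<Rightarrow> ('q \<times> 'a \<times> 'q) set \<Rightarrow> (nat \<Rightarrow> 'a) set" where
  "nba_lang q0 \<Sigma> \<delta> \<alpha> = {w \<in> words \<Sigma>. \<exists>r. nba_run q0 \<delta> w r \<and>
      infinite {i. (r i, w i, r (Suc i)) \<in> \<alpha>}}"

definition is_dpa :: "'p set \<Rightarrow> 'p \<Rightarrow> 'a set \<Rightarrow> ('p \<Rightarrow> 'a \<Rightarrow> 'p) \<Rightarrow> ('p \<Rightarrow> 'a \<Rightarrow> nat) \<Rightarrow> bool" where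
  "is_dpa P p0 \<Sigma> tr col \<longleftrightarrow>
     finite P \<and> p0 \<in> P \<and> finite \<Sigma> \<and>
     (\<forall>p\<in>P. \<forall>\<sigma>\<in>\<Sigma>. tr p \<sigma> \<in> P \<and> col p \<sigma> \<ge> 1)"

fun dpa_run :: "'p \<Rightarrow> ('p \<Rightarrow> 'a \<Rightarrow> 'p) \<Rightarrow> (nat \<Rightarrow> 'a) \<Rightarrow> nat \<Rightarrow> 'p" where
  "dpa_run p0 tr w 0 = p0"
| "dpa_run p0 tr w (Suc i) = tr (dpa_run p0 tr w i) (w i)"

definition dpa_lang :: "'p \<Rightarrow> 'a set \<Rightarrow> ('p \<Rightarrow> 'a \<Rightarrow> 'p) \<Rightarrow> ('p \<Rightarrow> 'a \<Rightarrow> nat) \<Rightarrow> (nat \<Rightarrow> 'a) set" where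
  "dpa_lang p0 \<Sigma> tr col = {w \<in> words \<Sigma>.
      even (Min {c. infinite {i. col (dpa_run p0 tr w i) (w i) = c}})}"

definition dpa_colours :: "'p set \<Rightarrow> 'a set \<Rightarrow> ('p \<Rightarrow> 'a \<Rightarrow> nat) \<Rightarrow> nat set" where
  "dpa_colours P \<Sigma> col = {col p \<sigma> | p \<sigma>. p \<in> P \<and> \<sigma> \<in> \<Sigma>}"

end

theory Submission
  imports Defs "HOL-Library.Infinite_Set"
begin


fun dd :: "'a list \<Rightarrow> 'a list \<Rightarrow> 'a list" where
  "dd acc [] = acc"
| "dd acc (x#xs) = dd (if x \<in> set acc then acc else acc @ [x]) xs"

definition dedup :: "'a list \<Rightarrow> 'a list" where "dedup xs = dd [] xs"

lemma dd_snoc: "dd acc (xs @ [x]) = (if x \<in> set (dd acc xs) then dd acc xs else dd acc xs @ [x])"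
  by (induction xs arbitrary: acc) auto

lemma dedup_snoc: "dedup (xs @ [x]) = (if x \<in> set (dedup xs) then dedup xs else dedup xs @ [x])"
  unfolding dedup_def by (rule dd_snoc)

lemma dedup_Nil[simp]: "dedup [] = []" by (simp add: dedup_def)

lemma dedup_set[simp]: "set (dedup xs) = set xs"
  by (induction xs rule: rev_induct) (auto simp: dedup_snoc)

lemma dedup_distinct[simp]: "distinct (dedup xs)"
  by (induction xs rule: rev_induct) (auto simp: dedup_snoc)

lemma dedup_length: "length (dedup xs) = card (set xs)"
  by (metis dedup_distinct dedup_set distinct_card)

lemma dedup_id: "distinct xs \<Longrightarrow> dedup xs = xs"
  by (induction xs rule: rev_induct) (auto simp: dedup_snoc)

lemma dedup_prefix: "\<exists>zs. dedup (xs @ ys) = dedup xs @ zs"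
proof (induction ys rule: rev_induct)
  case Nil then show ?case by simp
next
  case (snoc y ys)
  then obtain zs where "dedup (xs @ ys) = dedup xs @ zs" by blast
  then show ?case by (metis append.assoc append_Nil2 dedup_snoc)
qed

lemma dedup_take:
  assumes "distinct (take n xs)" "n \<le> length xs"
  shows "take n (dedup xs) = take n xs"
proof -
  obtain zs where "dedup xs = dedup (take n xs) @ zs"
    using dedup_prefix[of "take n xs" "drop n xs"] by auto
  then show ?thesis using assms dedup_id[OF assms(1)] by simp
qed

lemma dedup_pos:
  assumes "i < length xs"
  shows "\<exists>j. j \<le> i \<and> j < length (dedup xs) \<and> dedup xs ! j = xs ! i \<and>
             (\<not> distinct (take (Suc i) xs) \<longrightarrow> j < i)"
proof -
  let ?a = "take (Suc i) xs"
  have a: "?a = take i xs @ [xs ! i]" using assms by (simp add: take_Suc_conv_app_nth)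
  have xin: "xs ! i \<in> set (dedup ?a)" using a by simp
  then obtain j where j: "j < length (dedup ?a)" "dedup ?a ! j = xs ! i"
    by (metis in_set_conv_nth)
  obtain zs where zs: "dedup xs = dedup ?a @ zs"
    using dedup_prefix[of ?a "drop (Suc i) xs"] by auto
  have la: "length ?a = Suc i" using assms by simp
  have c1: "card (set ?a) \<le> Suc i" using card_length la by metis
  have c2: "\<not> distinct ?a \<Longrightarrow> card (set ?a) \<le> i"
    using card_length[of ?a] card_distinct[of ?a] la by linarith
  show ?thesis
    apply (rule exI[of _ j])
    using j zs c1 c2 dedup_length[of ?a] by (auto simp: nth_append)
qed




lemma inf_le_ex:
  fixes c :: "nat \<Rightarrow> nat"
  assumes "infinite {k. c k \<le> m}"
  shows "\<exists>v\<le>m. infinite {k. c k = v}"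
proof (rule ccontr)
  assume "\<not> ?thesis"
  then have "finite (\<Union>v\<in>{..m}. {k. c k = v})" by auto
  moreover have "{k. c k \<le> m} = (\<Union>v\<in>{..m}. {k. c k = v})" by auto
  ultimately show False using assms by simp
qed

lemma lt_finite:
  fixes c :: "nat \<Rightarrow> nat"
  assumes "\<And>u. u < v \<Longrightarrow> finite {k. c k = u}"
  shows "\<exists>K. \<forall>k\<ge>K. v \<le> c k"
proof -
  have "{k. c k < v} = (\<Union>u\<in>{..<v}. {k. c k = u})" by auto
  then have "finite {k. c k < v}" using assms by simp
  then obtain K where "\<forall>k\<in>{k. c k < v}. k < K"
    by (meson finite_nat_set_iff_bounded)
  then show ?thesis by (metis leD mem_Collect_eq not_le_imp_less)
qed

lemma infset_props:
  fixes c :: "nat \<Rightarrow> nat"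
  assumes "\<And>k. c k \<le> B"
  shows "finite {v. infinite {k. c k = v}}" "{v. infinite {k. c k = v}} \<noteq> {}"
proof -
  have "{v. infinite {k. c k = v}} \<subseteq> {..B}"
  proof
    fix v assume "v \<in> {v. infinite {k. c k = v}}"
    then have "{k. c k = v} \<noteq> {}" by (metis finite.emptyI mem_Collect_eq)
    then show "v \<in> {..B}" using assms by force
  qed
  then show "finite {v. infinite {k. c k = v}}" by (rule finite_subset) simp
  have "{k. c k \<le> B} = UNIV" using assms by auto
  then have "infinite {k. c k \<le> B}" by simp
  then show "{v. infinite {k. c k = v}} \<noteq> {}" using inf_le_ex by blast
qed

lemma transfer:
  assumes d: "is_dpa P p0 \<Sigma> tr col"
  shows "\<exists>(P'::nat set) p0' tr' col'. is_dpa P' p0' \<Sigma> tr' col' \<and>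
     dpa_lang p0' \<Sigma> tr' col' = dpa_lang p0 \<Sigma> tr col \<and> card P' = card P \<and>
     dpa_colours P' \<Sigma> col' = dpa_colours P \<Sigma> col"
proof -
  have fin: "finite P" and p0: "p0 \<in> P" and cl: "\<And>p \<sigma>. p \<in> P \<Longrightarrow> \<sigma> \<in> \<Sigma> \<Longrightarrow> tr p \<sigma> \<in> P \<and> col p \<sigma> \<ge> 1"
    and fs: "finite \<Sigma>"
    using d unfolding is_dpa_def by auto
  obtain h where h: "bij_betw h P {0..<card P}" using ex_bij_betw_finite_nat[OF fin] by blast
  define g where "g = inv_into P h"
  have gh: "\<And>p. p \<in> P \<Longrightarrow> g (h p) = p" unfolding g_def
    using h bij_betw_inv_into_left by fastforce
  define tr' where "tr' m \<sigma> = h (tr (g m) \<sigma>)" for m \<sigma>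
  define col' where "col' m \<sigma> = col (g m) \<sigma>" for m \<sigma>
  have run: "dpa_run (h p0) tr' w k = h (dpa_run p0 tr w k) \<and> dpa_run p0 tr w k \<in> P"
    if w: "w \<in> words \<Sigma>" for w k
  proof (induction k)
    case 0 then show ?case using p0 by simp
  next
    case (Suc k)
    have "w k \<in> \<Sigma>" using w unfolding words_def by auto
    then show ?case using Suc cl gh by (simp add: tr'_def)
  qed
  have lang: "dpa_lang (h p0) \<Sigma> tr' col' = dpa_lang p0 \<Sigma> tr col"
  proof -
    have "col' (dpa_run (h p0) tr' w i) (w i) = col (dpa_run p0 tr w i) (w i)"
      if "w \<in> words \<Sigma>" for w i using run[OF that, of i] gh by (simp add: col'_def)
    then show ?thesis unfolding dpa_lang_def by auto
  qed
  have isd: "is_dpa (h ` P) (h p0) \<Sigma> tr' col'"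
    unfolding is_dpa_def using fin p0 fs cl gh by (auto simp: tr'_def col'_def)
  have card: "card (h ` P) = card P" using h by (simp add: bij_betw_def card_image)
  have cols: "dpa_colours (h ` P) \<Sigma> col' = dpa_colours P \<Sigma> col"
    unfolding dpa_colours_def col'_def using gh by force
  show ?thesis using isd lang card cols by blast
qed




locale ldbactx =
  fixes Q :: "'q set" and q0 :: 'q and \<Sigma> :: "'a set"
    and \<delta> \<alpha> :: "('q \<times> 'a \<times> 'q) set" and Qd :: "'q set"
  assumes ldba: "is_ldba Q q0 \<Sigma> \<delta> \<alpha> Qd"
begin

lemma nba: "is_nba Q q0 \<Sigma> \<delta> \<alpha>" using ldba unfolding is_ldba_def by simp

lemma finQ: "finite Q" using nba unfolding is_nba_def by simp
lemma q0Q: "q0 \<in> Q" using nba unfolding is_nba_def by simp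
lemma finS: "finite \<Sigma>" using nba unfolding is_nba_def by simp
lemma dQ: "\<delta> \<subseteq> Q \<times> \<Sigma> \<times> Q" using nba unfolding is_nba_def by simp
lemma ad: "\<alpha> \<subseteq> \<delta>" using nba unfolding is_nba_def by simp
lemma QdQ: "Qd \<subseteq> Q" using ldba unfolding is_ldba_def by simp
lemma aQd: "\<alpha> \<subseteq> Qd \<times> \<Sigma> \<times> Qd" using ldba unfolding is_ldba_def by simp
lemma det: "q \<in> Qd \<Longrightarrow> \<sigma> \<in> \<Sigma> \<Longrightarrow> \<exists>!q'. (q, \<sigma>, q') \<in> \<delta>"
  using ldba unfolding is_ldba_def by simp
lemma clos: "(q, \<sigma>, q') \<in> \<delta> \<Longrightarrow> q \<in> Qd \<Longrightarrow> q' \<in> Qd"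
  using ldba unfolding is_ldba_def by blast
lemma q0Qd: "q0 \<notin> Qd" using ldba unfolding is_ldba_def by simp

lemma finQd: "finite Qd" using finQ QdQ finite_subset by blast

definition succ :: "'q \<Rightarrow> 'a \<Rightarrow> 'q" where "succ q \<sigma> = (THE q'. (q, \<sigma>, q') \<in> \<delta>)"

lemma succ_in: "q \<in> Qd \<Longrightarrow> \<sigma> \<in> \<Sigma> \<Longrightarrow> (q, \<sigma>, succ q \<sigma>) \<in> \<delta>"
  unfolding succ_def by (rule theI') (rule det)

lemma succ_unique: "q \<in> Qd \<Longrightarrow> \<sigma> \<in> \<Sigma> \<Longrightarrow> (q, \<sigma>, q') \<in> \<delta> \<Longrightarrow> q' = succ q \<sigma>"
  unfolding succ_def by (rule the1_equality[symmetric]) (rule det, assumption+)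

lemma succ_Qd: "q \<in> Qd \<Longrightarrow> \<sigma> \<in> \<Sigma> \<Longrightarrow> succ q \<sigma> \<in> Qd"
  using succ_in clos by blast

definition qs :: "'q list" where "qs = (SOME xs. set xs = Qd \<and> distinct xs)"

lemma qs: "set qs = Qd" "distinct qs"
  using someI_ex[OF finite_distinct_list[OF finQd]] unfolding qs_def by auto

definition Ml :: "'q list \<Rightarrow> 'a \<Rightarrow> 'q list" where "Ml L \<sigma> = map (\<lambda>q. succ q \<sigma>) L"
definition newS where "newS S \<sigma> = {q'. \<exists>q\<in>S. (q, \<sigma>, q') \<in> \<delta> \<and> q' \<notin> Qd}"
definition Fl where "Fl S \<sigma> = filter (\<lambda>q'. \<exists>q\<in>S. (q, \<sigma>, q') \<in> \<delta>) qs"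
definition newL where "newL S L \<sigma> = dedup (Ml L \<sigma> @ Fl S \<sigma>)"
definition step :: "'q set \<times> 'q list \<Rightarrow> 'a \<Rightarrow> 'q set \<times> 'q list" where
  "step p \<sigma> = (newS (fst p) \<sigma>, newL (fst p) (snd p) \<sigma>)"
definition bad where "bad L \<sigma> i \<longleftrightarrow> \<not> distinct (take (Suc i) (Ml L \<sigma>))"
definition acc where "acc L \<sigma> i \<longleftrightarrow> (L ! i, \<sigma>, succ (L ! i) \<sigma>) \<in> \<alpha>"
definition codes where "codes L \<sigma> = insert (2 * card Qd + 1)
   ({2 * i + 1 |i. i < length L \<and> bad L \<sigma> i} \<union> {2 * i + 2 |i. i < length L \<and> acc L \<sigma> i})"
definition colr :: "'q set \<times> 'q list \<Rightarrow> 'a \<Rightarrow> nat" where "colr p \<sigma> = Min (codes (snd p) \<sigma>)"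

lemma codes_finite: "finite (codes L \<sigma>)"
proof -
  have "{2 * i + 1 |i. i < length L \<and> bad L \<sigma> i} \<subseteq> (\<lambda>i. 2*i+1) ` {..<length L}" by auto
  moreover have "{2 * i + 2 |i. i < length L \<and> acc L \<sigma> i} \<subseteq> (\<lambda>i. 2*i+2) ` {..<length L}" by auto
  ultimately show ?thesis unfolding codes_def by (meson finite_Un finite_imageI finite_insert finite_lessThan finite_subset)
qed

lemma colr_in: "colr p \<sigma> \<in> codes (snd p) \<sigma>"
  unfolding colr_def using codes_finite by (rule Min_in) (simp add: codes_def)

lemma colr_le: "x \<in> codes (snd p) \<sigma> \<Longrightarrow> colr p \<sigma> \<le> x"
  unfolding colr_def using codes_finite by (rule Min_le)

lemma colr_bounds: "1 \<le> colr p \<sigma>" "colr p \<sigma> \<le> 2 * card Qd + 1"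
proof -
  show "colr p \<sigma> \<le> 2 * card Qd + 1" by (rule colr_le) (simp add: codes_def)
  show "1 \<le> colr p \<sigma>" using colr_in[of p \<sigma>] unfolding codes_def by auto
qed

definition Pset :: "('q set \<times> 'q list) set" where
  "Pset = {p. fst p \<subseteq> Q - Qd \<and> distinct (snd p) \<and> set (snd p) \<subseteq> Qd}"

lemma step_P: "p \<in> Pset \<Longrightarrow> \<sigma> \<in> \<Sigma> \<Longrightarrow> step p \<sigma> \<in> Pset"
proof -
  assume p: "p \<in> Pset" and s: "\<sigma> \<in> \<Sigma>"
  have "newS (fst p) \<sigma> \<subseteq> Q - Qd" unfolding newS_def using dQ by blast
  moreover have "set (newL (fst p) (snd p) \<sigma>) \<subseteq> Qd"
  proof -
    have "set (Ml (snd p) \<sigma>) \<subseteq> Qd" using p s succ_Qd unfolding Ml_def Pset_def by auto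
    moreover have "set (Fl (fst p) \<sigma>) \<subseteq> Qd" unfolding Fl_def using qs by auto
    ultimately show ?thesis unfolding newL_def by simp
  qed
  moreover have "distinct (newL (fst p) (snd p) \<sigma>)" unfolding newL_def by simp
  ultimately show ?thesis unfolding Pset_def step_def by simp
qed

lemma init_P: "({q0}, []) \<in> Pset"
  unfolding Pset_def using q0Q q0Qd by auto

definition run where "run w k = dpa_run ({q0}, []) step w k"

lemma run_0[simp]: "run w 0 = ({q0}, [])" by (simp add: run_def)
lemma run_Suc[simp]: "run w (Suc k) = step (run w k) (w k)" by (simp add: run_def)

lemma run_P: "w \<in> words \<Sigma> \<Longrightarrow> run w k \<in> Pset"
  by (induction k) (auto simp: words_def init_P step_P)

lemma P_len: "p \<in> Pset \<Longrightarrow> length (snd p) \<le> card Qd"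
proof -
  assume "p \<in> Pset"
  then have "distinct (snd p)" "set (snd p) \<subseteq> Qd" unfolding Pset_def by auto
  then show ?thesis using card_mono[OF finQd] distinct_card by metis
qed

end



context ldbactx begin

definition reach where "reach w k q \<longleftrightarrow> (\<exists>\<rho>. \<rho> 0 = q0 \<and> \<rho> k = q \<and> (\<forall>i<k. (\<rho> i, w i, \<rho> (Suc i)) \<in> \<delta>))"

lemma reach_ext: "reach w k p \<Longrightarrow> (p, w k, q) \<in> \<delta> \<Longrightarrow> reach w (Suc k) q"
proof -
  assume "reach w k p" and pq: "(p, w k, q) \<in> \<delta>"
  then obtain \<rho> where r: "\<rho> 0 = q0" "\<rho> k = p" "\<forall>i<k. (\<rho> i, w i, \<rho> (Suc i)) \<in> \<delta>"
    unfolding reach_def by blast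
  define \<rho>' where "\<rho>' = \<rho>(Suc k := q)"
  have "\<rho>' 0 = q0" "\<rho>' (Suc k) = q" using r by (auto simp: \<rho>'_def)
  moreover have "\<forall>i<Suc k. (\<rho>' i, w i, \<rho>' (Suc i)) \<in> \<delta>"
  proof (intro allI impI)
    fix i assume "i < Suc k"
    then show "(\<rho>' i, w i, \<rho>' (Suc i)) \<in> \<delta>"
    proof (cases "i = k")
      case True then show ?thesis using r pq by (simp add: \<rho>'_def)
    next
      case False then have "i < k" using \<open>i < Suc k\<close> by simp
      then show ?thesis using r by (simp add: \<rho>'_def)
    qed
  qed
  ultimately show ?thesis unfolding reach_def by (intro exI[of _ \<rho>']) simp
qed

lemma step_pred:
  assumes q: "q \<in> fst (step p \<sigma>) \<union> set (snd (step p \<sigma>))" and p: "p \<in> Pset" and s: "\<sigma> \<in> \<Sigma>"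
  shows "\<exists>x\<in>fst p \<union> set (snd p). (x, \<sigma>, q) \<in> \<delta>"
proof -
  have "q \<in> newS (fst p) \<sigma> \<or> q \<in> set (Ml (snd p) \<sigma>) \<or> q \<in> set (Fl (fst p) \<sigma>)"
    using q unfolding step_def newL_def by auto
  then show ?thesis
  proof (elim disjE)
    assume "q \<in> newS (fst p) \<sigma>" then show ?thesis unfolding newS_def by blast
  next
    assume "q \<in> set (Ml (snd p) \<sigma>)"
    then obtain x where x: "x \<in> set (snd p)" "q = succ x \<sigma>" unfolding Ml_def by auto
    then have "x \<in> Qd" using p unfolding Pset_def by auto
    then show ?thesis using x succ_in s by blast
  next
    assume "q \<in> set (Fl (fst p) \<sigma>)" then show ?thesis unfolding Fl_def by auto
  qed
qed

lemma run_reach: "w \<in> words \<Sigma> \<Longrightarrow> q \<in> fst (run w k) \<union> set (snd (run w k)) \<Longrightarrow> reach w k q"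
proof (induction k arbitrary: q)
  case 0
  then have "q = q0" by simp
  then show ?case unfolding reach_def by (intro exI[of _ "\<lambda>_. q0"]) simp
next
  case (Suc k)
  have wk: "w k \<in> \<Sigma>" using Suc.prems unfolding words_def by auto
  have P: "run w k \<in> Pset" using run_P Suc.prems by blast
  obtain x where "x \<in> fst (run w k) \<union> set (snd (run w k))" "(x, w k, q) \<in> \<delta>"
    using step_pred[OF _ P wk, of q] Suc.prems(2) by auto
  then show ?case using Suc.IH Suc.prems(1) reach_ext by blast
qed

lemma bad_mono: "bad L \<sigma> i \<Longrightarrow> i \<le> j \<Longrightarrow> bad L \<sigma> j"
proof -
  assume a: "bad L \<sigma> i" "i \<le> j"
  have "take (Suc i) (Ml L \<sigma>) = take (Suc i) (take (Suc j) (Ml L \<sigma>))" using a(2) by (simp add: min_def)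
  then show ?thesis using a(1) distinct_take[of "take (Suc j) (Ml L \<sigma>)" "Suc i"] unfolding bad_def by auto
qed

lemma newL_eq: "snd (run w (Suc k)) = dedup (Ml (snd (run w k)) (w k) @ Fl (fst (run w k)) (w k))"
  by (simp add: step_def newL_def)

end



context ldbactx begin

lemma words_in: "w \<in> words \<Sigma> \<Longrightarrow> w i \<in> \<Sigma>" unfolding words_def by auto

lemma codes_cases:
  assumes "c \<in> codes L \<sigma>"
  shows "c = 2 * card Qd + 1 \<or> (\<exists>i. c = 2*i+1 \<and> i < length L \<and> bad L \<sigma> i) \<or>
         (\<exists>i. c = 2*i+2 \<and> i < length L \<and> acc L \<sigma> i)"
  using assms unfolding codes_def by blast

lemma nba_to_dpa:
  assumes w: "w \<in> words \<Sigma>" and r: "nba_run q0 \<delta> w r"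
    and inf: "infinite {i. (r i, w i, r (Suc i)) \<in> \<alpha>}"
  shows "even (Min {c. infinite {i. colr (run w i) (w i) = c}})"
proof -
  have wS: "\<And>i. w i \<in> \<Sigma>" using w words_in by blast
  have rd: "\<And>i. (r i, w i, r (Suc i)) \<in> \<delta>" and r0: "r 0 = q0" using r unfolding nba_run_def by auto
  obtain i0 where "(r i0, w i0, r (Suc i0)) \<in> \<alpha>" using inf not_finite_existsD by blast
  then have ex: "\<exists>k. r k \<in> Qd" using aQd by blast
  define t where "t = (LEAST k. r k \<in> Qd)"
  have rt: "r t \<in> Qd" unfolding t_def using ex by (rule LeastI_ex)
  have before: "\<And>i. i < t \<Longrightarrow> r i \<notin> Qd" unfolding t_def using not_less_Least by blast
  have t0: "t > 0" using rt r0 q0Qd by (cases t) auto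
  have inS: "i < t \<Longrightarrow> r i \<in> fst (run w i)" for i
  proof (induction i)
    case 0 then show ?case using r0 by simp
  next
    case (Suc i)
    then have "r i \<in> fst (run w i)" "r (Suc i) \<notin> Qd" using before by auto
    then show ?case using rd[of i] by (auto simp: step_def newS_def)
  qed
  have after: "k \<ge> t \<Longrightarrow> r k \<in> Qd" for k
  proof (induction k rule: dec_induct)
    case base then show ?case using rt .
  next
    case (step k) then show ?case using clos rd by blast
  qed
  have rsucc: "k \<ge> t \<Longrightarrow> r (Suc k) = succ (r k) (w k)" for k
    using succ_unique after rd wS by blast
  define L where "L k = snd (run w k)" for k
  define F where "F k = Fl (fst (run w k)) (w k)" for k
  have LSuc: "L (Suc k) = dedup (Ml (L k) (w k) @ F k)" for k
    unfolding L_def F_def by (rule newL_eq)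
  have inL: "k \<ge> t \<Longrightarrow> r k \<in> set (L k)" for k
  proof (induction k rule: dec_induct)
    case base
    obtain t' where t': "t = Suc t'" using t0 by (cases t) auto
    then have "r t' \<in> fst (run w t')" using inS by simp
    moreover have "(r t', w t', r t) \<in> \<delta>" using rd t' by simp
    ultimately have "r t \<in> set (F t')" unfolding F_def Fl_def using rt qs by auto
    then show ?case using LSuc t' by simp
  next
    case (step k)
    then have "r (Suc k) \<in> set (Ml (L k) (w k))" using rsucc unfolding Ml_def by auto
    then show ?case using LSuc by simp
  qed
  define pos where "pos k = (LEAST i. i < length (L k) \<and> L k ! i = r k)" for k
  have pos: "k \<ge> t \<Longrightarrow> pos k < length (L k) \<and> L k ! pos k = r k" for k
  proof -
    assume "k \<ge> t"
    then have "\<exists>i. i < length (L k) \<and> L k ! i = r k" using inL in_set_conv_nth by metis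
    then show ?thesis unfolding pos_def by (rule LeastI_ex)
  qed
  have posdec: "k \<ge> t \<Longrightarrow> pos (Suc k) \<le> pos k \<and> (bad (L k) (w k) (pos k) \<longrightarrow> pos (Suc k) < pos k)" for k
  proof -
    assume kt: "k \<ge> t"
    let ?xs = "Ml (L k) (w k) @ F k"
    have pl: "pos k < length (Ml (L k) (w k))" using pos[OF kt] unfolding Ml_def by simp
    have xi: "?xs ! pos k = r (Suc k)"
      using pos[OF kt] pl rsucc[OF kt] by (simp add: nth_append Ml_def)
    have tk: "take (Suc (pos k)) ?xs = take (Suc (pos k)) (Ml (L k) (w k))"
      using pl by simp
    obtain j where j: "j \<le> pos k" "j < length (dedup ?xs)" "dedup ?xs ! j = ?xs ! pos k"
      "\<not> distinct (take (Suc (pos k)) ?xs) \<longrightarrow> j < pos k"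
      using dedup_pos[of "pos k" ?xs] pl by auto
    have "pos (Suc k) \<le> j"
      unfolding pos_def using j xi LSuc[of k] by (intro Least_le) simp
    then show ?thesis using j tk unfolding bad_def by auto
  qed
  define v where "v = (LEAST v. \<exists>k\<ge>t. pos k = v)"
  obtain K where K: "K \<ge> t" "pos K = v"
    using LeastI_ex[of "\<lambda>v. \<exists>k\<ge>t. pos k = v"] unfolding v_def by blast
  have vle: "k \<ge> t \<Longrightarrow> v \<le> pos k" for k unfolding v_def by (rule Least_le) blast
  have posle: "k \<ge> K \<Longrightarrow> pos k \<le> pos K" for k
  proof (induction k rule: dec_induct)
    case base then show ?case by simp
  next
    case (step k) then show ?case using posdec[of k] K by auto
  qed
  have posK: "k \<ge> K \<Longrightarrow> pos k = pos K" for k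
  proof -
    assume a: "k \<ge> K"
    then have "t \<le> k" using K by simp
    then show ?thesis using posle[OF a] vle[of k] K by simp
  qed
  define p where "p = pos K"
  have nobad: "k \<ge> K \<Longrightarrow> \<not> bad (L k) (w k) p" for k
    using posdec[of k] posK[of k] posK[of "Suc k"] K unfolding p_def by auto
  have plen: "k \<ge> K \<Longrightarrow> p < length (L k)" for k using pos[of k] posK[of k] K unfolding p_def by auto
  have plt: "p < card Qd" using plen[of K] P_len[OF run_P[OF w, of K]] unfolding L_def by simp
  define c where "c k = colr (run w k) (w k)" for k
  have noodd: "k \<ge> K \<Longrightarrow> \<not> (odd (c k) \<and> c k \<le> 2*p+1)" for k
  proof
    assume kK: "k \<ge> K" and oc: "odd (c k) \<and> c k \<le> 2*p+1"
    have "c k \<in> codes (L k) (w k)" unfolding c_def L_def by (rule colr_in)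
    then consider "c k = 2 * card Qd + 1" | i where "c k = 2*i+1" "i < length (L k)" "bad (L k) (w k) i"
      | i where "c k = 2*i+2" by (meson codes_cases)
    then show False
    proof cases
      case 1 then show False using oc plt by simp
    next
      case (2 i)
      then have "i \<le> p" using oc by simp
      then have "bad (L k) (w k) p" using bad_mono 2 by blast
      then show False using nobad kK by blast
    next
      case (3 i) then show False using oc by simp
    qed
  qed
  have accinf: "infinite {k. c k \<le> 2*p+2}"
    unfolding infinite_nat_iff_unbounded_le
  proof
    fix m
    obtain n where n: "n \<ge> max m K" "(r n, w n, r (Suc n)) \<in> \<alpha>"
      using inf unfolding infinite_nat_iff_unbounded_le by blast
    then have nt: "n \<ge> t" "n \<ge> K" using K by auto
    have "L n ! p = r n" using pos[OF nt(1)] posK[OF nt(2)] unfolding p_def by simp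
    then have "acc (L n) (w n) p" unfolding acc_def using n rsucc[OF nt(1)] by simp
    then have "2*p+2 \<in> codes (L n) (w n)" unfolding codes_def using plen[OF nt(2)] by blast
    then have "c n \<le> 2*p+2" unfolding c_def L_def by (rule colr_le)
    then show "\<exists>n\<ge>m. n \<in> {k. c k \<le> 2*p+2}" using n by auto
  qed
  let ?I = "{v. infinite {k. c k = v}}"
  have cb: "c k \<le> 2 * card Qd + 1" for k unfolding c_def by (rule colr_bounds)
  have If: "finite ?I" "?I \<noteq> {}" using infset_props[of c, OF cb] by auto
  obtain u where u: "u \<le> 2*p+2" "infinite {k. c k = u}" using inf_le_ex[OF accinf] by blast
  have mu: "Min ?I \<le> u" using If u by (intro Min_le) auto
  have mI: "infinite {k. c k = Min ?I}" using Min_in[OF If] by simp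
  have "even (Min ?I)"
  proof (rule ccontr)
    assume "odd (Min ?I)"
    then have "Min ?I \<le> 2*p+1" using mu u by presburger
    have "{k. c k = Min ?I} \<subseteq> {..<K}"
    proof
      fix x assume x: "x \<in> {k. c k = Min ?I}"
      show "x \<in> {..<K}"
      proof (rule ccontr)
        assume "x \<notin> {..<K}"
        then have "K \<le> x" by simp
        then show False using noodd[of x] x \<open>odd (Min ?I)\<close> \<open>Min ?I \<le> 2*p+1\<close> by simp
      qed
    qed
    then show False using mI finite_subset by blast
  qed
  then show ?thesis unfolding c_def .
qed

end



context ldbactx begin

lemma dpa_to_nba:
  assumes w: "w \<in> words \<Sigma>" and ev: "even (Min {c. infinite {i. colr (run w i) (w i) = c}})"
  shows "\<exists>r. nba_run q0 \<delta> w r \<and> infinite {i. (r i, w i, r (Suc i)) \<in> \<alpha>}"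
proof -
  have wS: "\<And>i. w i \<in> \<Sigma>" using w words_in by blast
  define c where "c k = colr (run w k) (w k)" for k
  define L where "L k = snd (run w k)" for k
  define F where "F k = Fl (fst (run w k)) (w k)" for k
  have LSuc: "L (Suc k) = dedup (Ml (L k) (w k) @ F k)" for k
    unfolding L_def F_def by (rule newL_eq)
  let ?I = "{v. infinite {k. c k = v}}"
  have cb: "c k \<le> 2 * card Qd + 1" for k unfolding c_def by (rule colr_bounds)
  have If: "finite ?I" "?I \<noteq> {}" using infset_props[of c, OF cb] by auto
  define m where "m = Min ?I"
  have mI: "infinite {k. c k = m}" using Min_in[OF If] unfolding m_def by simp
  have evm: "even m" using ev unfolding m_def c_def .
  have "\<And>u. u < m \<Longrightarrow> finite {k. c k = u}"
  proof (rule ccontr)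
    fix u assume "u < m" "infinite {k. c k = u}"
    then have "m \<le> u" unfolding m_def using If by (intro Min_le) auto
    then show False using \<open>u < m\<close> by simp
  qed
  then obtain K where K: "\<forall>k\<ge>K. m \<le> c k" using lt_finite by blast
  obtain k1 where "c k1 = m" using mI not_finite_existsD by blast
  then have "m \<ge> 1" using colr_bounds unfolding c_def by metis
  moreover obtain q where "m = 2*q" using evm by blast
  ultimately have mp: "m = 2*(q-1)+2" by simp
  define p where "p = q - 1"
  have mp: "m = 2*p+2" using mp unfolding p_def .
  have cm: "c k = m \<Longrightarrow> p < length (L k) \<and> acc (L k) (w k) p" for k
  proof -
    assume ck: "c k = m"
    have "c k \<in> codes (L k) (w k)" unfolding c_def L_def by (rule colr_in)
    then consider "c k = 2 * card Qd + 1" | i where "c k = 2*i+1"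
      | i where "c k = 2*i+2" "i < length (L k)" "acc (L k) (w k) i" by (meson codes_cases)
    then show ?thesis
    proof cases
      case 1 then show ?thesis using ck mp by presburger
    next
      case (2 i) then show ?thesis using ck mp by presburger
    next
      case (3 i) then have "i = p" using ck mp by simp
      then show ?thesis using 3 by simp
    qed
  qed
  have nobad: "k \<ge> K \<Longrightarrow> p < length (L k) \<Longrightarrow> \<not> bad (L k) (w k) p" for k
  proof
    assume "k \<ge> K" "p < length (L k)" "bad (L k) (w k) p"
    then have "2*p+1 \<in> codes (L k) (w k)" unfolding codes_def by blast
    then have "c k \<le> 2*p+1" unfolding c_def L_def by (rule colr_le)
    then show False using K \<open>k \<ge> K\<close> mp by fastforce
  qed
  have keep: "k \<ge> K \<Longrightarrow> p < length (L k) \<Longrightarrow> p < length (L (Suc k)) \<and> L (Suc k) ! p = succ (L k ! p) (w k)" for k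
  proof -
    assume kK: "k \<ge> K" and pl: "p < length (L k)"
    let ?M = "Ml (L k) (w k)"
    let ?xs = "?M @ F k"
    have pM: "p < length ?M" using pl unfolding Ml_def by simp
    have d: "distinct (take (Suc p) ?xs)" using nobad[OF kK pl] pM unfolding bad_def by simp
    have tk: "take (Suc p) (dedup ?xs) = take (Suc p) ?xs" using d pM by (intro dedup_take) auto
    then have "length (take (Suc p) (dedup ?xs)) = Suc p" using pM by simp
    then have l: "p < length (dedup ?xs)" by simp
    have "dedup ?xs ! p = take (Suc p) (dedup ?xs) ! p" by simp
    also have "\<dots> = ?xs ! p" using tk pM by (simp add: nth_append)
    also have "\<dots> = succ (L k ! p) (w k)" using pM pl by (simp add: nth_append Ml_def)
    finally show ?thesis using l LSuc by simp
  qed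
  obtain k0 where k0: "k0 \<ge> K" "c k0 = m" using mI unfolding infinite_nat_iff_unbounded_le by blast
  have plen: "k \<ge> k0 \<Longrightarrow> p < length (L k)" for k
  proof (induction k rule: dec_induct)
    case base then show ?case using cm k0 by blast
  next
    case (step k) then show ?case using keep k0 by simp
  qed
  define x where "x k = L k ! p" for k
  have xsucc: "k \<ge> k0 \<Longrightarrow> x (Suc k) = succ (x k) (w k)" for k
    using keep[of k] plen[of k] k0 unfolding x_def by simp
  have xin: "k \<ge> k0 \<Longrightarrow> x k \<in> set (L k)" for k using plen unfolding x_def by simp
  have xQd: "k \<ge> k0 \<Longrightarrow> x k \<in> Qd" for k
    using xin[of k] run_P[OF w, of k] unfolding Pset_def L_def by auto
  have "reach w k0 (x k0)" using run_reach[OF w] xin[of k0] unfolding L_def by simp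
  then obtain \<rho> where \<rho>: "\<rho> 0 = q0" "\<rho> k0 = x k0" "\<forall>i<k0. (\<rho> i, w i, \<rho> (Suc i)) \<in> \<delta>"
    unfolding reach_def by blast
  define r where "r i = (if i \<le> k0 then \<rho> i else x i)" for i
  have rx: "i \<ge> k0 \<Longrightarrow> r i = x i" for i using \<rho>(2) unfolding r_def by auto
  have rt: "(r i, w i, r (Suc i)) \<in> \<delta>" for i
  proof (cases "i < k0")
    case True then show ?thesis using \<rho>(3) unfolding r_def by simp
  next
    case False
    then have "r i = x i" "r (Suc i) = succ (x i) (w i)" using rx xsucc by auto
    then show ?thesis using succ_in xQd False wS by simp
  qed
  have run: "nba_run q0 \<delta> w r" unfolding nba_run_def using rt \<rho>(1) by (simp add: r_def)
  have "infinite {i. (r i, w i, r (Suc i)) \<in> \<alpha>}"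
    unfolding infinite_nat_iff_unbounded_le
  proof
    fix n
    obtain k where k: "k \<ge> max n k0" "c k = m" using mI unfolding infinite_nat_iff_unbounded_le by blast
    then have "acc (L k) (w k) p" using cm by blast
    then have "(r k, w k, r (Suc k)) \<in> \<alpha>"
      using k rx[of k] rx[of "Suc k"] xsucc[of k] unfolding acc_def x_def by simp
    then show "\<exists>k\<ge>n. k \<in> {i. (r i, w i, r (Suc i)) \<in> \<alpha>}" using k by auto
  qed
  then show ?thesis using run by blast
qed

lemma lang_eq: "dpa_lang ({q0}, []) \<Sigma> step colr = nba_lang q0 \<Sigma> \<delta> \<alpha>"
proof -
  have "dpa_lang ({q0}, []) \<Sigma> step colr = {w \<in> words \<Sigma>. even (Min {c. infinite {i. colr (run w i) (w i) = c}})}"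
    unfolding dpa_lang_def run_def by simp
  then show ?thesis unfolding nba_lang_def using nba_to_dpa dpa_to_nba by blast
qed

end



context ldbactx begin

definition DL where "DL = {L. distinct L \<and> set L \<subseteq> Qd}"

lemma DL_UN: "DL = (\<Union>k\<in>{0..card Qd}. {xs. length xs = k \<and> distinct xs \<and> set xs \<subseteq> Qd})"
proof -
  have "length L \<le> card Qd" if "L \<in> DL" for L
  proof -
    have "distinct L" "set L \<subseteq> Qd" using that unfolding DL_def by auto
    then show ?thesis using card_mono[OF finQd, of "set L"] distinct_card[of L] by simp
  qed
  then show ?thesis unfolding DL_def by auto
qed

lemma DL_finite: "finite DL"
proof -
  have "{xs. length xs = k \<and> distinct xs \<and> set xs \<subseteq> Qd} \<subseteq> {xs. set xs \<subseteq> Qd \<and> length xs = k}" for k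
    by auto
  then have "finite {xs. length xs = k \<and> distinct xs \<and> set xs \<subseteq> Qd}" for k
    by (rule finite_subset) (rule finite_lists_length_eq[OF finQd])
  then show ?thesis unfolding DL_UN by simp
qed

lemma DL_card: "card DL \<le> (\<Sum>i = 0..card Qd. fact (card Qd) div fact (card Qd - i))"
proof -
  have "card DL \<le> (\<Sum>k = 0..card Qd. card {xs. length xs = k \<and> distinct xs \<and> set xs \<subseteq> Qd})"
    unfolding DL_UN by (rule card_UN_le) simp
  also have "\<dots> = (\<Sum>i = 0..card Qd. fact (card Qd) div fact (card Qd - i))"
  proof (rule sum.cong)
    fix k assume "k \<in> {0..card Qd}"
    then have k: "k \<le> card Qd" by simp
    have "card {xs. length xs = k \<and> distinct xs \<and> set xs \<subseteq> Qd} = \<Prod>{card Qd - k + 1 .. card Qd}"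
      by (rule card_lists_distinct_length_eq[OF finQd k])
    also have "\<dots> = fact (card Qd) div fact (card Qd - k)"
      using fact_div_fact[of "card Qd - k" "card Qd"] by simp
    finally show "card {xs. length xs = k \<and> distinct xs \<and> set xs \<subseteq> Qd} = fact (card Qd) div fact (card Qd - k)" .
  qed simp
  finally show ?thesis .
qed

lemma Pset_eq: "Pset = Pow (Q - Qd) \<times> DL"
  unfolding Pset_def DL_def by auto

lemma Pset_finite: "finite Pset"
  unfolding Pset_eq using DL_finite finQ by simp

lemma Pset_card: "card Pset \<le> 2 ^ card Q * (\<Sum>i = 0..card Qd. fact (card Qd) div fact (card Qd - i))"
proof -
  have "card Pset = 2 ^ card (Q - Qd) * card DL"
    unfolding Pset_eq using finQ by (simp add: card_cartesian_product card_Pow)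
  also have "\<dots> \<le> 2 ^ card Q * card DL"
    using card_mono[OF finQ, of "Q - Qd"] by (intro mult_le_mono1 power_increasing) auto
  also have "\<dots> \<le> 2 ^ card Q * (\<Sum>i = 0..card Qd. fact (card Qd) div fact (card Qd - i))"
    using DL_card by simp
  finally show ?thesis .
qed

lemma isdpa: "is_dpa Pset ({q0}, []) \<Sigma> step colr"
  unfolding is_dpa_def
proof (intro conjI ballI)
  fix p \<sigma> assume "p \<in> Pset" "\<sigma> \<in> \<Sigma>"
  then show "step p \<sigma> \<in> Pset" by (rule step_P)
  show "1 \<le> colr p \<sigma>" by (rule colr_bounds)
qed (auto simp: Pset_finite init_P finS)

lemma colours: "card (dpa_colours Pset \<Sigma> colr) \<le> 2 * card Qd + 1"
proof -
  have "dpa_colours Pset \<Sigma> colr \<subseteq> {1..2 * card Qd + 1}"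
    unfolding dpa_colours_def using colr_bounds by auto
  then have "card (dpa_colours Pset \<Sigma> colr) \<le> card {1..2 * card Qd + 1}" by (intro card_mono) auto
  then show ?thesis by simp
qed

end

lemma sum_bound:
  fixes nd n :: nat and x :: nat
  assumes "x \<le> 2 ^ n * (\<Sum>i = 0..nd. fact nd div fact (nd - i))" "nd \<ge> 1"
  shows "real x \<le> 2 ^ n * exp 1 * real nd * fact nd"
proof -
  have "(\<Sum>i = 0..nd. fact nd div fact (nd - i)) \<le> of_nat (card {0..nd}) * (fact nd :: nat)"
    by (rule sum_bounded_above) (rule div_le_dividend)
  then have s: "(\<Sum>i = 0..nd. fact nd div fact (nd - i)) \<le> (nd + 1) * (fact nd :: nat)" by simp
  have "x \<le> 2 ^ n * ((nd + 1) * fact nd)" using assms(1) s mult_le_mono2 le_trans by blast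
  then have "real x \<le> real (2 ^ n * ((nd + 1) * fact nd))" by (rule of_nat_mono)
  also have "\<dots> = 2 ^ n * ((real nd + 1) * fact nd)" by (simp add: algebra_simps)
  also have "\<dots> \<le> 2 ^ n * ((exp 1 * real nd) * fact nd)"
  proof -
    have e: "2 \<le> exp (1::real)" using exp_ge_add_one_self[of 1] by simp
    have "2 * real nd \<le> exp 1 * real nd" by (rule mult_right_mono[OF e]) simp
    moreover have "1 \<le> real nd" using assms(2) by simp
    ultimately have "real nd + 1 \<le> exp 1 * real nd" by linarith
    then show ?thesis by (intro mult_left_mono mult_right_mono) auto
  qed
  finally show ?thesis by (simp add: algebra_simps)
qed

theorem mainTheorem4:
  fixes Q :: "'q set" and q0 :: 'q and \<Sigma> :: "'a set"
    and \<delta> \<alpha> :: "('q \<times> 'a \<times> 'q) set" and Qd :: "'q set"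
  assumes "is_ldba Q q0 \<Sigma> \<delta> \<alpha> Qd"
  defines "n \<equiv> card Q" and "nd \<equiv> card Qd"
  shows "\<exists>(P :: nat set) p0 tr col.
           is_dpa P p0 \<Sigma> tr col \<and>
           dpa_lang p0 \<Sigma> tr col = nba_lang q0 \<Sigma> \<delta> \<alpha> \<and>
           card P \<le> 2 ^ n * (\<Sum>i = 0..nd. fact nd div fact (nd - i)) \<and>
           (nd \<ge> 1 \<longrightarrow> real (card P) \<le> 2 ^ n * exp 1 * real nd * fact nd) \<and>
           card (dpa_colours P \<Sigma> col) \<le> 2 * nd + 1"
proof -
  interpret ldbactx Q q0 \<Sigma> \<delta> \<alpha> Qd by unfold_locales (rule assms(1))
  obtain P :: "nat set" and p0 tr col where
    t: "is_dpa P p0 \<Sigma> tr col" "dpa_lang p0 \<Sigma> tr col = dpa_lang ({q0}, []) \<Sigma> step colr"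
       "card P = card Pset" "dpa_colours P \<Sigma> col = dpa_colours Pset \<Sigma> colr"
    using transfer[OF isdpa] by blast
  have c1: "card P \<le> 2 ^ n * (\<Sum>i = 0..nd. fact nd div fact (nd - i))"
    using t(3) Pset_card unfolding n_def nd_def by simp
  show ?thesis
    apply (rule exI[of _ P], rule exI[of _ p0], rule exI[of _ tr], rule exI[of _ col])
    using t c1 lang_eq colours sum_bound[OF c1] unfolding nd_def by simp
qed


end
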